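(* Let $n \geq 4$ and let $\mathcal G = G(n;S)$ be a circulant graph on $n$ vertices with symbol $S$. Suppose that $\mathcal G$ has at least four distinct eigenvalues and that its spectrum satisfies the following condition: for all eigenvalues $\lambda_i,\lambda_j,\lambda_r,\lambda_s$ of $\mathcal G$ with $\lambda_r \neq \lambda_s$, $$\frac{\lambda_i-\lambda_j}{\lambda_r-\lambda_s}\in\mathbb{Q}.$$ Then $\mathcal G$ is integral, i.e. all eigenvalues of its adjacency matrix are integers.
   Context: For an integer $n$ and a set $S\subseteq\{1,\dots,n-1\}$ such that $s\in S$ if and only if $n-s\in S$, the circulant graph $G(n;S)$ is the undirected graph on vertex set $\mathbb{Z}_n=\{0,1,\dots,n-1\}$ in which $i$ and $j$ are adjacent iff $i-j \bmod n\in S$; $S$ is called the symbol and $\#S$ the degree. The eigenvalues (spectrum) of a graph are the eigenvalues of its adjacency matrix, listed with multiplicity as $\lambda_0,\dots,\lambda_{n-1}$. A graph is integral if all its eigenvalues are integers. *)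

theory Defs
  imports Complex_Main "Jordan_Normal_Form.Char_Poly"
begin

definition circulant_symbol :: "nat \<Rightarrow> nat set \<Rightarrow> bool" where
  "circulant_symbol n S \<longleftrightarrow> S \<subseteq> {1..<n} \<and> (\<forall>s \<in> {1..<n}. s \<in> S \<longleftrightarrow> n - s \<in> S)"

definition circulant_adj :: "nat \<Rightarrow> nat set \<Rightarrow> complex mat" where
  "circulant_adj n S = mat n n (\<lambda>(i, j). if nat ((int i - int j) mod int n) \<in> S then 1 else 0)"

end

theory Submission imports Defs begin

lemma root_pow_n: "n > 0 \<Longrightarrow> cis (2*pi/n) ^ n = 1"
  by (simp add: DeMoivre)

lemma root_pow_ne1: assumes "0 < m" "m < n" shows "cis (2*pi/real n) ^ m \<noteq> 1"
proof
  assume "cis (2*pi/real n) ^ m = 1"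
  hence "cos (real m * (2*pi/real n)) = 1" by (simp add: DeMoivre complex_eq_iff)
  then obtain k :: int where k: "real m * (2*pi/real n) = real_of_int k * 2 * pi"
    using cos_one_2pi_int by auto
  have "real n > 0" using assms by simp
  hence h: "(real m / real n) * (2*pi) = real_of_int k * (2*pi)" using k by (simp add: field_simps)
  have "2*pi \<noteq> 0" by simp
  hence "real m / real n = real_of_int k" using h mult_right_cancel by blast
  moreover have "0 < real m / real n" "real m / real n < 1" using assms by auto
  ultimately have "0 < k" "k < 1" by simp_all
  thus False by simp
qed

lemma root_pow_add_n: "n > 0 \<Longrightarrow> cis (2*pi/n) ^ (n + x) = cis (2*pi/n) ^ x"
  by (simp add: power_add root_pow_n)

definition dd :: "nat \<Rightarrow> nat \<Rightarrow> nat \<Rightarrow> nat" where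
  "dd n i k = (if k \<le> i then i - k else i + n - k)"

lemma dd_eq: "i < n \<Longrightarrow> k < n \<Longrightarrow> nat ((int i - int k) mod int n) = dd n i k"
proof (cases "k \<le> i")
  case True
  assume "i < n" "k < n"
  hence "(int i - int k) mod int n = int i - int k" using True by (intro mod_pos_pos_trivial) auto
  thus ?thesis using True by (simp add: dd_def)
next
  case False
  assume "i < n" "k < n"
  hence "(int i - int k) mod int n = int i - int k + int n"
  proof -
    have "(int i - int k) mod int n = (int i - int k + int n) mod int n" by simp
    also have "\<dots> = int i - int k + int n" using False \<open>i < n\<close> \<open>k < n\<close> by (intro mod_pos_pos_trivial) auto
    finally show ?thesis .
  qed
  thus ?thesis using False by (simp add: dd_def)
qed

lemma dd_inj: "i < n \<Longrightarrow> inj_on (dd n i) {0..<n}"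
  by (auto simp: inj_on_def dd_def split: if_splits)

lemma dd_surj: "i < n \<Longrightarrow> dd n i ` {0..<n} = {0..<n}"
  by (rule endo_inj_surj) (auto simp: dd_inj dd_def)

lemma dd_pow: assumes "i < n" "k < n" "dd n i k < n"
  shows "cis (2*pi/n) ^ (j*k) = cis (2*pi/n) ^ (j*i) * cis (2*pi/n) ^ (j*(n - dd n i k))"
proof (cases "k \<le> i")
  case True
  have e: "n - dd n i k + i = n + k" using True assms by (simp add: dd_def)
  have "j*i + j*(n - dd n i k) = j*(n - dd n i k + i)" by (simp add: algebra_simps)
  also have "\<dots> = j*n + j*k" using e by (simp add: algebra_simps)
  finally have "j*i + j*(n - dd n i k) = j*n + j*k" .
  hence "cis (2*pi/n) ^ (j*i) * cis (2*pi/n) ^ (j*(n - dd n i k)) = cis (2*pi/n) ^ (n*j) * cis (2*pi/n) ^ (j*k)"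
    by (metis power_add mult.commute)
  also have "\<dots> = cis (2*pi/n) ^ (j*k)" using assms by (simp add: power_mult root_pow_n)
  finally show ?thesis by simp
next
  case False
  have e: "n - dd n i k + i = k" using False assms by (simp add: dd_def)
  have "j*i + j*(n - dd n i k) = j*(n - dd n i k + i)" by (simp add: algebra_simps)
  also have "\<dots> = j*k" using e by (simp add: algebra_simps)
  finally have "j*i + j*(n - dd n i k) = j*k" .
  thus ?thesis by (metis power_add)
qed

definition mu :: "nat \<Rightarrow> nat set \<Rightarrow> nat \<Rightarrow> complex" where
  "mu n S j = (\<Sum>s\<in>S. cis (2*pi/n) ^ (j*(n - s)))"

definition ev :: "nat \<Rightarrow> nat \<Rightarrow> complex vec" where
  "ev n j = vec n (\<lambda>k. cis (2*pi/n) ^ (j*k))"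

lemma eig_row:
  assumes S: "S \<subseteq> {1..<n}" and i: "i < n"
  shows "(\<Sum>k = 0..<n. (if dd n i k \<in> S then 1 else 0) * cis (2*pi/n) ^ (j*k))
       = cis (2*pi/n) ^ (j*i) * mu n S j"
proof -
  let ?w = "cis (2*pi/n)"
  let ?g = "\<lambda>s. (if s \<in> S then 1 else 0) * ?w ^ (j*(n - s))"
  have "(\<Sum>k = 0..<n. (if dd n i k \<in> S then 1 else 0) * ?w ^ (j*k))
      = (\<Sum>k = 0..<n. ?w ^ (j*i) * ?g (dd n i k))"
  proof (rule sum.cong[OF refl])
    fix k assume "k \<in> {0..<n}"
    hence k: "k < n" by simp
    have "dd n i k < n" using i k by (auto simp: dd_def)
    thus "(if dd n i k \<in> S then 1 else 0) * ?w ^ (j*k) = ?w ^ (j*i) * ?g (dd n i k)"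
      using dd_pow[OF i k] by simp
  qed
  also have "\<dots> = ?w ^ (j*i) * (\<Sum>k = 0..<n. ?g (dd n i k))" by (simp add: sum_distrib_left)
  also have "(\<Sum>k = 0..<n. ?g (dd n i k)) = sum ?g (dd n i ` {0..<n})"
    by (simp add: sum.reindex[OF dd_inj[OF i]])
  also have "\<dots> = sum ?g {0..<n}" by (simp add: dd_surj[OF i])
  also have "\<dots> = (\<Sum>s\<in>{0..<n} \<inter> S. ?w ^ (j*(n - s)))"
    by (subst sum.inter_restrict) (auto intro!: sum.cong)
  also have "{0..<n} \<inter> S = S" using S by auto
  finally show ?thesis by (simp add: mu_def)
qed

lemma eig:
  assumes S: "S \<subseteq> {1..<n}" and n: "n > 0"
  shows "eigenvalue (circulant_adj n S) (mu n S j)"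
  unfolding eigenvalue_def eigenvector_def
proof (intro exI[of _ "ev n j"] conjI)
  show "ev n j \<in> carrier_vec (dim_row (circulant_adj n S))" by (simp add: ev_def circulant_adj_def)
  have "ev n j $ 0 = 1" using n by (simp add: ev_def)
  thus "ev n j \<noteq> 0\<^sub>v (dim_row (circulant_adj n S))" using n by (auto simp: circulant_adj_def)
  show "circulant_adj n S *\<^sub>v ev n j = mu n S j \<cdot>\<^sub>v ev n j"
  proof (rule eq_vecI)
    fix i assume "i < dim_vec (mu n S j \<cdot>\<^sub>v ev n j)"
    hence i: "i < n" by (simp add: ev_def)
    have "(circulant_adj n S *\<^sub>v ev n j) $ i
       = (\<Sum>k = 0..<n. (if dd n i k \<in> S then 1 else 0) * cis (2*pi/n) ^ (j*k))"
      using i by (auto simp: circulant_adj_def ev_def scalar_prod_def dd_eq intro!: sum.cong)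
    also have "\<dots> = cis (2*pi/n) ^ (j*i) * mu n S j" by (rule eig_row[OF S i])
    finally show "(circulant_adj n S *\<^sub>v ev n j) $ i = (mu n S j \<cdot>\<^sub>v ev n j) $ i"
      using i by (simp add: ev_def)
  qed (simp add: circulant_adj_def ev_def)
qed

lemma mu_sum:
  assumes S: "S \<subseteq> {1..<n}" and n: "n > 0"
  shows "(\<Sum>j<n. mu n S j) = 0"
proof -
  let ?w = "cis (2*pi/n)"
  have "(\<Sum>j<n. mu n S j) = (\<Sum>s\<in>S. \<Sum>j<n. (?w ^ (n - s)) ^ j)"
    unfolding mu_def by (subst sum.swap) (auto intro!: sum.cong simp: power_mult[symmetric] mult.commute)
  also have "\<dots> = (\<Sum>s\<in>S. 0)"
  proof (rule sum.cong[OF refl])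
    fix s assume "s \<in> S"
    hence s: "0 < n - s" "n - s < n" using S by auto
    have ne: "?w ^ (n - s) \<noteq> 1" by (rule root_pow_ne1[OF s])
    have "(?w ^ (n - s)) ^ n = 1" by (simp add: power_mult[symmetric] mult.commute[of _ n] power_mult root_pow_n[OF n])
    thus "(\<Sum>j<n. (?w ^ (n - s)) ^ j) = 0" using ne by (simp add: geometric_sum)
  qed
  finally show ?thesis by simp
qed

lemma mu0: "mu n S 0 = of_nat (card S)"
  by (simp add: mu_def)


lemma eig_alg_int:
  assumes "eigenvalue (circulant_adj n S) k"
  shows "algebraic_int k"
proof -
  define B :: "int mat" where "B = mat n n (\<lambda>(i, j). if nat ((int i - int j) mod int n) \<in> S then 1 else 0)"
  have Bc: "B \<in> carrier_mat n n" by (simp add: B_def)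
  have AB: "circulant_adj n S = map_mat of_int B"
    by (rule eq_matI) (auto simp: B_def circulant_adj_def)
  have Ac: "circulant_adj n S \<in> carrier_mat n n" by (simp add: circulant_adj_def)
  have cp: "char_poly (circulant_adj n S) = map_poly of_int (char_poly B)"
    unfolding AB by (rule of_int_hom.char_poly_hom[OF Bc])
  have r: "poly (char_poly (circulant_adj n S)) k = 0"
    using assms eigenvalue_root_char_poly[OF Ac] by simp
  have lc: "lead_coeff (char_poly (circulant_adj n S)) = 1"
    using degree_monic_char_poly[OF Ac] by simp
  have co: "\<forall>i. coeff (char_poly (circulant_adj n S)) i \<in> \<int>"
    unfolding cp by (simp add: coeff_map_poly)
  show ?thesis by (rule algebraic_int.intros[OF lc co r])
qed

lemma eig_empty:
  assumes "eigenvalue (circulant_adj n {}) k" shows "k = 0"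
proof -
  obtain v where v: "v \<in> carrier_vec n" "v \<noteq> 0\<^sub>v n" "circulant_adj n {} *\<^sub>v v = k \<cdot>\<^sub>v v"
    using assms by (auto simp: eigenvalue_def eigenvector_def circulant_adj_def)
  have "circulant_adj n {} *\<^sub>v v = 0\<^sub>v n"
    by (rule eq_vecI) (insert v(1), auto simp: circulant_adj_def scalar_prod_def intro!: sum.neutral)
  with v have "k \<cdot>\<^sub>v v = 0\<^sub>v n" by simp
  show ?thesis
  proof (rule ccontr)
    assume k0: "k \<noteq> 0"
    from v(2) obtain i where i: "i < n" "v $ i \<noteq> 0" using v(1) by (auto simp: vec_eq_iff)
    have "(k \<cdot>\<^sub>v v) $ i = k * v $ i" using i v(1) by simp
    also have "\<dots> \<noteq> 0" using k0 i by simp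
    finally show False using \<open>k \<cdot>\<^sub>v v = 0\<^sub>v n\<close> i by simp
  qed
qed

theorem theorem1:
  fixes n :: nat and S :: "nat set"
  assumes "n \<ge> 4"
    and "circulant_symbol n S"
    and "card {k. eigenvalue (circulant_adj n S) k} \<ge> 4"
    and "\<And>li lj lr ls. eigenvalue (circulant_adj n S) li \<Longrightarrow> eigenvalue (circulant_adj n S) lj \<Longrightarrow>
           eigenvalue (circulant_adj n S) lr \<Longrightarrow> eigenvalue (circulant_adj n S) ls \<Longrightarrow>
           lr \<noteq> ls \<Longrightarrow> (li - lj) / (lr - ls) \<in> \<rat>"
  shows "\<forall>k. eigenvalue (circulant_adj n S) k \<longrightarrow> k \<in> \<int>"
proof (cases "S = {}")
  case True
  show ?thesis
  proof (intro allI impI)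
    fix k assume "eigenvalue (circulant_adj n S) k"
    hence "k = 0" using True eig_empty by simp
    thus "k \<in> \<int>" by simp
  qed
next
  case False
  note Q = assms(4)
  let ?E = "{k. eigenvalue (circulant_adj n S) k}"
  have n: "n > 0" using assms(1) by simp
  have S: "S \<subseteq> {1..<n}" using assms(2) by (simp add: circulant_symbol_def)
  have fS: "finite S" using S finite_subset by blast
  have cS: "card S > 0" using False fS by (simp add: card_gt_0_iff)
  have "card ?E \<ge> 2" using assms(3) by simp
  then obtain r s where rs: "r \<in> ?E" "s \<in> ?E" "r \<noteq> s"
    by (metis One_nat_def card.infinite card_le_Suc0_iff_eq not_less_eq_eq numeral_2_eq_2 zero_less_Suc not_le)
  define d where "d = r - s"
  have d0: "d \<noteq> 0" using rs by (simp add: d_def)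
  define a :: complex where "a = of_nat (card S)"
  have ea: "eigenvalue (circulant_adj n S) a" using eig[OF S n, of 0] by (simp add: mu0 a_def)
  define q where "q j = (mu n S j - a) / d" for j
  have qQ: "q j \<in> \<rat>" for j unfolding q_def d_def
    using Q[OF eig[OF S n] ea] rs by auto
  have muq: "mu n S j = a + q j * d" for j using d0 by (simp add: q_def)
  have "0 = (\<Sum>j<n. mu n S j)" using mu_sum[OF S n] by simp
  also have "\<dots> = of_nat n * a + d * (\<Sum>j<n. q j)"
    by (simp add: muq sum.distrib sum_distrib_left mult.commute)
  finally have eq: "of_nat n * a + d * (\<Sum>j<n. q j) = 0" by simp
  have na: "of_nat n * a \<noteq> 0" using n cS by (simp add: a_def)
  have sq: "(\<Sum>j<n. q j) \<noteq> 0" using eq na by auto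
  have e2: "d * (\<Sum>j<n. q j) = - (of_nat n * a)" using eq add_eq_0_iff by blast
  have "d = - (of_nat n * a) / (\<Sum>j<n. q j)" using e2 sq by (simp add: field_simps)
  moreover have "(\<Sum>j<n. q j) \<in> \<rat>" using qQ by (intro Rats_sum) simp
  ultimately have dQ: "d \<in> \<rat>" by (simp add: a_def)
  show ?thesis
  proof (intro allI impI)
    fix k assume k: "eigenvalue (circulant_adj n S) k"
    have "(k - a) / d \<in> \<rat>" unfolding d_def using Q[OF k ea] rs by auto
    moreover have "a \<in> \<rat>" by (simp add: a_def)
    ultimately have "a + ((k - a) / d) * d \<in> \<rat>" using dQ by (intro Rats_add Rats_mult)
    moreover have "a + ((k - a) / d) * d = k" using d0 by simp
    ultimately have "k \<in> \<rat>" by simp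
    thus "k \<in> \<int>" using rational_algebraic_int_is_int[OF eig_alg_int[OF k]] by simp
  qed
qed

end
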